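(* Let $n\ge3$. Then $d'_{L_n^2}=n-\left\lceil\frac n5\right\rceil$.
   Context: $L_n^2$ is the graph on $\{1,\dots,n\}$ with edges $\{i,i+1\}$ and $\{i,i+2\}$. A bouquet in a graph $G$ is a subgraph that is a star with vertex set $\{w,z_1,\dots,z_t\}$, $t\ge1$, and edges $\{w,z_i\}$ (all edges of $G$); $w$ is its root and $z_1,\dots,z_t$ its flowers. A set $\mathcal B=\{B_1,\dots,B_r\}$ of bouquets of $G$ is semi-strongly disjoint if $V(B_i)\cap V(B_j)=\emptyset$ for $i\ne j$ and no two roots of bouquets in $\mathcal B$ are adjacent in $G$. $\mathcal F(\mathcal B)$ denotes the set of all flowers of bouquets in $\mathcal B$, and $d'_G=\max\{|\mathcal F(\mathcal B)|:\mathcal B$ a semi-strongly disjoint set of bouquets of $G\}$. *)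

theory Defs
  imports Complex_Main
begin

definition L2_adj :: "nat \<Rightarrow> nat \<Rightarrow> nat \<Rightarrow> bool" where
  "L2_adj n i j \<longleftrightarrow> i \<in> {1..n} \<and> j \<in> {1..n} \<and>
     (j = i + 1 \<or> i = j + 1 \<or> j = i + 2 \<or> i = j + 2)"

(* A bouquet in a graph with vertex set V and adjacency E is represented by a pair
   (w, Z): root w and (nonempty) set of flowers Z, with every {w,z} an edge. *)
definition is_bouquet :: "'a set \<Rightarrow> ('a \<Rightarrow> 'a \<Rightarrow> bool) \<Rightarrow> 'a \<times> 'a set \<Rightarrow> bool" where
  "is_bouquet V E B \<longleftrightarrow> fst B \<in> V \<and> snd B \<noteq> {} \<and> finite (snd B) \<and>
     snd B \<subseteq> V \<and> (\<forall>z\<in>snd B. E (fst B) z)"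

definition bouquet_vertices :: "'a \<times> 'a set \<Rightarrow> 'a set" where
  "bouquet_vertices B = insert (fst B) (snd B)"

definition semi_strongly_disjoint ::
  "'a set \<Rightarrow> ('a \<Rightarrow> 'a \<Rightarrow> bool) \<Rightarrow> ('a \<times> 'a set) set \<Rightarrow> bool" where
  "semi_strongly_disjoint V E \<B> \<longleftrightarrow> finite \<B> \<and> (\<forall>B\<in>\<B>. is_bouquet V E B) \<and>
     (\<forall>B\<in>\<B>. \<forall>B'\<in>\<B>. B \<noteq> B' \<longrightarrow>
        bouquet_vertices B \<inter> bouquet_vertices B' = {} \<and> \<not> E (fst B) (fst B'))"

definition flowers :: "('a \<times> 'a set) set \<Rightarrow> 'a set" where
  "flowers \<B> = (\<Union>B\<in>\<B>. snd B)"

definition d_prime :: "'a set \<Rightarrow> ('a \<Rightarrow> 'a \<Rightarrow> bool) \<Rightarrow> nat" where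
  "d_prime V E = Max {card (flowers \<B>) | \<B>. semi_strongly_disjoint V E \<B>}"

end

theory Submission
  imports Defs
begin

lemma L2_mono: "L2_adj n i j \<Longrightarrow> n \<le> m \<Longrightarrow> L2_adj m i j"
  by (auto simp: L2_adj_def)

lemma flowers_sub: "semi_strongly_disjoint {1..n} E B \<Longrightarrow> flowers B \<subseteq> {1..n}"
  by (auto simp: semi_strongly_disjoint_def is_bouquet_def flowers_def)

lemma upper:
  assumes A: "semi_strongly_disjoint {1..n} (L2_adj n) \<B>"
  shows "card (flowers \<B>) + nat (ceiling (real n/5)) \<le> n"
proof -
  define F where "F = flowers \<B>"
  define U where "U = {1..n} - F"
  have FS: "F \<subseteq> {1..n}" using flowers_sub[OF A] by (simp add: F_def)
  have cov: "{1..n} \<subseteq> (\<Union>u\<in>U. {u-2..u+2})"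
  proof
    fix v assume v: "v \<in> {1..n}"
    show "v \<in> (\<Union>u\<in>U. {u-2..u+2})"
    proof (cases "v \<in> F")
      case False
      then have "v \<in> U" using v by (simp add: U_def)
      then show ?thesis by force
    next
      case True
      then obtain B where B: "B \<in> \<B>" "v \<in> snd B" by (auto simp: F_def flowers_def)
      have adj: "L2_adj n (fst B) v" using A B by (auto simp: semi_strongly_disjoint_def is_bouquet_def)
      have "fst B \<notin> F"
      proof
        assume "fst B \<in> F"
        then obtain B' where B': "B' \<in> \<B>" "fst B \<in> snd B'" by (auto simp: F_def flowers_def)
        show False
        proof (cases "B' = B")
          case True
          then have "L2_adj n (fst B) (fst B)" using A B B' by (auto simp: semi_strongly_disjoint_def is_bouquet_def)
          then show False by (auto simp: L2_adj_def)
        next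
          case False
          then have "bouquet_vertices B \<inter> bouquet_vertices B' = {}"
            using A B B' by (auto simp: semi_strongly_disjoint_def)
          then show False using B' by (auto simp: bouquet_vertices_def)
        qed
      qed
      moreover have "fst B \<in> {1..n}" using A B by (auto simp: semi_strongly_disjoint_def is_bouquet_def)
      ultimately have "fst B \<in> U" by (simp add: U_def)
      moreover have "v \<in> {fst B - 2..fst B + 2}" using adj by (auto simp: L2_adj_def)
      ultimately show ?thesis by blast
    qed
  qed
  have finU: "finite U" by (simp add: U_def)
  have "n \<le> card (\<Union>u\<in>U. {u-2..u+2})"
    using card_mono[OF _ cov] finU by simp
  also have "\<dots> \<le> (\<Sum>u\<in>U. card {u-2..u+2})" by (rule card_UN_le[OF finU])
  also have "\<dots> \<le> (\<Sum>u\<in>U. 5)" by (rule sum_mono) simp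
  also have "\<dots> = 5 * card U" by simp
  finally have n5: "n \<le> 5 * card U" .
  then have "real n \<le> real (5 * card U)" by (simp only: of_nat_le_iff)
  then have "real n / 5 \<le> real (card U)" by simp
  then have "ceiling (real n / 5) \<le> int (card U)" by (simp add: ceiling_le_iff)
  then have c: "nat (ceiling (real n / 5)) \<le> card U" by (metis nat_int nat_mono)
  have "card U = n - card F" unfolding U_def using FS by (simp add: card_Diff_subset finite_subset)
  moreover have "card F \<le> n" using card_mono[OF _ FS] by simp
  ultimately have "card F + nat (ceiling (real n / 5)) \<le> n" using c by linarith
  then show ?thesis by (simp only: F_def)
qed

definition ach :: "nat \<Rightarrow> nat \<Rightarrow> bool" where
  "ach n k \<longleftrightarrow> (\<exists>\<B>. semi_strongly_disjoint {1..n} (L2_adj n) \<B> \<and> card (flowers \<B>) = k)"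

lemma ach_step:
  assumes "ach n k"
  shows "ach (n+5) (k+4)"
proof -
  obtain \<B> where A: "semi_strongly_disjoint {1..n} (L2_adj n) \<B>" and k: "card (flowers \<B>) = k"
    using assms by (auto simp: ach_def)
  define N where "N = (n+3, {n+1,n+2,n+4,n+5})"
  have FS: "flowers \<B> \<subseteq> {1..n}" by (rule flowers_sub[OF A])
  have fin: "finite \<B>" using A by (simp add: semi_strongly_disjoint_def)
  have Bsub: "\<And>B. B \<in> \<B> \<Longrightarrow> bouquet_vertices B \<subseteq> {1..n}"
    using A by (auto simp: semi_strongly_disjoint_def is_bouquet_def bouquet_vertices_def)
  have Nnot: "N \<notin> \<B>" using Bsub by (force simp: N_def bouquet_vertices_def)
  have "semi_strongly_disjoint {1..n+5} (L2_adj (n+5)) (insert N \<B>)"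
    unfolding semi_strongly_disjoint_def
  proof (intro conjI ballI impI)
    show "finite (insert N \<B>)" using fin by simp
  next
    fix B assume "B \<in> insert N \<B>"
    then show "is_bouquet {1..n + 5} (L2_adj (n + 5)) B"
    proof
      assume "B = N" then show ?thesis by (auto simp: N_def is_bouquet_def L2_adj_def)
    next
      assume "B \<in> \<B>"
      then have "is_bouquet {1..n} (L2_adj n) B" using A by (simp add: semi_strongly_disjoint_def)
      then show ?thesis by (auto simp: is_bouquet_def intro: L2_mono)
    qed
  next
    fix B B' assume B: "B \<in> insert N \<B>" and B': "B' \<in> insert N \<B>" and ne: "B \<noteq> B'"
    show "bouquet_vertices B \<inter> bouquet_vertices B' = {}"
    proof (cases "B = N")
      case True
      then have "B' \<in> \<B>" using B' ne by auto
      then show ?thesis using Bsub[of B'] True by (auto simp: N_def bouquet_vertices_def)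
    next
      case False
      then have Bin: "B \<in> \<B>" using B by auto
      show ?thesis
      proof (cases "B' = N")
        case True
        then show ?thesis using Bsub[OF Bin] by (auto simp: N_def bouquet_vertices_def)
      next
        case False
        then show ?thesis using A Bin B' ne by (auto simp: semi_strongly_disjoint_def)
      qed
    qed
    show "\<not> L2_adj (n + 5) (fst B) (fst B')"
    proof (cases "B = N")
      case True
      then have "B' \<in> \<B>" using B' ne by auto
      then have "fst B' \<le> n" using Bsub[of B'] by (auto simp: bouquet_vertices_def)
      then show ?thesis using True by (auto simp: N_def L2_adj_def)
    next
      case False
      then have Bin: "B \<in> \<B>" using B by auto
      then have fB: "fst B \<le> n" using Bsub[of B] by (auto simp: bouquet_vertices_def)
      show ?thesis
      proof (cases "B' = N")
        case True
        then show ?thesis using fB by (auto simp: N_def L2_adj_def)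
      next
        case False
        then have B'in: "B' \<in> \<B>" using B' by auto
        then have fB': "fst B' \<le> n" using Bsub[of B'] by (auto simp: bouquet_vertices_def)
        have "\<not> L2_adj n (fst B) (fst B')" using A Bin B'in ne by (auto simp: semi_strongly_disjoint_def)
        then show ?thesis using fB fB' by (auto simp: L2_adj_def)
      qed
    qed
  qed
  moreover have "flowers (insert N \<B>) = {n+1,n+2,n+4,n+5} \<union> flowers \<B>"
    by (simp add: flowers_def N_def)
  moreover have "card ({n+1,n+2,n+4,n+5} \<union> flowers \<B>) = k + 4"
  proof -
    have "{n+1,n+2,n+4,n+5} \<inter> flowers \<B> = {}" using FS by auto
    moreover have "finite (flowers \<B>)" using FS finite_subset by blast
    ultimately have "card ({n+1,n+2,n+4,n+5} \<union> flowers \<B>) = card {n+1,n+2,n+4,n+5} + card (flowers \<B>)"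
      by (simp add: card_Un_disjoint)
    then show ?thesis using k by simp
  qed
  ultimately show ?thesis unfolding ach_def by metis
qed

lemma ach_base3: "ach 3 2"
  unfolding ach_def
  apply (rule exI[of _ "{(2,{1,3})}"])
  by (auto simp: semi_strongly_disjoint_def is_bouquet_def L2_adj_def flowers_def)

lemma ach_base4: "ach 4 3"
  unfolding ach_def
  apply (rule exI[of _ "{(2,{1,3,4})}"])
  by (auto simp: semi_strongly_disjoint_def is_bouquet_def L2_adj_def flowers_def)

lemma ach_base5: "ach 5 4"
  unfolding ach_def
  apply (rule exI[of _ "{(3,{1,2,4,5})}"])
  by (auto simp: semi_strongly_disjoint_def is_bouquet_def L2_adj_def flowers_def)

lemma ach_base6: "ach 6 4"
  unfolding ach_def
  apply (rule exI[of _ "{(3,{1,2,4,5})}"])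
  by (auto simp: semi_strongly_disjoint_def is_bouquet_def L2_adj_def flowers_def)

lemma ach_base7: "ach 7 5"
  unfolding ach_def
  apply (rule exI[of _ "{(3,{1,2,4,5}),(6,{7})}"])
  by (auto simp: semi_strongly_disjoint_def is_bouquet_def L2_adj_def flowers_def bouquet_vertices_def)

lemma ceil_step: "nat (ceiling (real (n+5) / 5)) = nat (ceiling (real n / 5)) + 1"
proof -
  have "real (n+5)/5 = real n / 5 + 1" by (simp add: field_simps)
  then have "ceiling (real (n+5) / 5) = ceiling (real n / 5 + 1)" by (simp only:)
  also have "\<dots> = ceiling (real n / 5) + 1" by (rule ceiling_add_one)
  finally have "ceiling (real (n+5) / 5) = ceiling (real n / 5) + 1" .
  moreover have "ceiling (real n / 5) \<ge> 0" by simp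
  ultimately show ?thesis by (simp add: nat_add_distrib)
qed

lemma ceil_le: "nat (ceiling (real n / 5)) \<le> n"
proof -
  have "real n / 5 \<le> real n" by simp
  then have "ceiling (real n / 5) \<le> int n" by (simp add: ceiling_le_iff)
  then show ?thesis by simp
qed

lemma ach_all: "n \<ge> 3 \<Longrightarrow> ach n (n - nat (ceiling (real n / 5)))"
proof (induction n rule: less_induct)
  case (less n)
  show ?case
  proof (cases "n \<le> 7")
    case True
    then have "n = 3 \<or> n = 4 \<or> n = 5 \<or> n = 6 \<or> n = 7" using less.prems by auto
    moreover have "nat (ceiling (real 3 / 5)) = 1" "nat (ceiling (real 4 / 5)) = 1"
      "nat (ceiling (real 5 / 5)) = 1" "nat (ceiling (real 6 / 5)) = 2" "nat (ceiling (real 7 / 5)) = 2"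
      by (simp_all add: ceiling_eq_iff)
    ultimately show ?thesis using ach_base3 ach_base4 ach_base5 ach_base6 ach_base7 by auto
  next
    case False
    define m where "m = n - 5"
    have nm: "n = m + 5" using False by (simp add: m_def)
    have "ach m (m - nat (ceiling (real m / 5)))" using less.IH[of m] nm False by simp
    then have "ach (m+5) (m - nat (ceiling (real m / 5)) + 4)" by (rule ach_step)
    moreover have "m - nat (ceiling (real m / 5)) + 4 = (m+5) - nat (ceiling (real (m+5) / 5))"
      using ceil_step[of m] ceil_le[of m] by simp
    ultimately show ?thesis using nm by simp
  qed
qed

theorem proposition4p3:
  fixes n :: nat
  assumes "n \<ge> 3"
  shows "d_prime {1..n} (L2_adj n) = n - nat (ceiling (real n / 5))"
proof -
  let ?S = "{card (flowers \<B>) | \<B>. semi_strongly_disjoint {1..n} (L2_adj n) \<B>}"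
  obtain B where "semi_strongly_disjoint {1..n} (L2_adj n) B" "card (flowers B) = n - nat (ceiling (real n / 5))"
    using ach_all[OF assms] unfolding ach_def by blast
  then have mem: "n - nat (ceiling (real n / 5)) \<in> ?S" by (metis (mono_tags, lifting) mem_Collect_eq)
  have le: "\<And>x. x \<in> ?S \<Longrightarrow> x \<le> n - nat (ceiling (real n / 5))"
  proof -
    fix x assume "x \<in> ?S"
    then obtain B where "semi_strongly_disjoint {1..n} (L2_adj n) B" "x = card (flowers B)" by blast
    then show "x \<le> n - nat (ceiling (real n / 5))" using upper[of n B] by linarith
  qed
  have fin: "finite ?S"
    by (rule finite_subset[of _ "{0..n - nat (ceiling (real n / 5))}"]) (use le in \<open>simp only: subset_iff atLeastAtMost_iff, blast\<close>, simp)
  show ?thesis unfolding d_prime_def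
    by (rule Max_eqI[OF fin le mem])
qed

end
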